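(* Let $\tilde X\in\mathbb{R}^{n\times k}$, $\Gamma=\tilde X^t\tilde X$, $\alpha\in\mathbb{R}^k$, and let $\mathcal{I},\mathcal{C}$ be subsets of $\{1,\dots,k\}$. For each $\ell$ put $B(\mathcal{C})_\ell=\sum_{\ell'\in\mathcal{C},\,\ell'\neq\ell}\Gamma_{\ell\ell'}\alpha_{\ell'}$. Then $$\|B(\mathcal{C})\|_{\mathcal{I},2}^2\le 2\,\|\alpha\|_{\mathcal{C},1}^2\,r(\mathcal{I}).$$
   Context: $\mathcal{G}_1,\dots,\mathcal{G}_p$ is a partition of $\{1,\dots,k\}$ into groups with $t_j=\#\mathcal{G}_j$; each index $\ell$ is written $\ell=(j,t)$ with $j$ the group containing $\ell$ and $t\in\{1,\dots,t_j\}$ its rank inside $\mathcal{G}_j$. For $u\in\mathbb{R}^k$, $\|u\|_{\mathcal{I},1}=\sum_{\ell\in\mathcal{I}}|u_\ell|$, $\|u\|_{\mathcal{I},2}^2=\sum_{\ell\in\mathcal{I}}u_\ell^2$. $\gamma_{BT}=\sup\{|\Gamma_{(j,t)(j',t')}|: t\neq t'\}$ (over all $j,j'$ and admissible ranks), $\gamma_{BG}=\sup\{|\Gamma_{(j,t)(j',t)}|: j\ne j',\ t\le t_j\wedge t_{j'}\}$, and $r(\mathcal{I})=\#(\mathcal{I})\,\gamma_{BT}^2+\#\{j:\exists t,\ (j,t)\in\mathcal{I}\}\,\gamma_{BG}^2$. *)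

theory Defs
  imports Main "HOL-Analysis.Analysis"
begin

definition gram :: "nat \<Rightarrow> (nat \<Rightarrow> nat \<Rightarrow> real) \<Rightarrow> nat \<Rightarrow> nat \<Rightarrow> real" where
  "gram n X l l' = (\<Sum>i=1..n. X i l * X i l')"

definition is_partition :: "nat \<Rightarrow> nat \<Rightarrow> (nat \<Rightarrow> nat set) \<Rightarrow> bool" where
  "is_partition k p G \<longleftrightarrow>
     (\<forall>j\<in>{1..p}. G j \<noteq> {}) \<and>
     (\<forall>j\<in>{1..p}. \<forall>j'\<in>{1..p}. j \<noteq> j' \<longrightarrow> G j \<inter> G j' = {}) \<and>
     (\<Union>j\<in>{1..p}. G j) = {1..k}"

text \<open>Rank of l inside the group G j (position in increasing order, from 1 to t_j).\<close>
definition rank_in :: "(nat \<Rightarrow> nat set) \<Rightarrow> nat \<Rightarrow> nat \<Rightarrow> nat" where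
  "rank_in G j l = card {l'\<in>G j. l' \<le> l}"

text \<open>Finite suprema; the convention sup of the empty set = 0 (values are absolute values).\<close>
definition gamma_BT :: "nat \<Rightarrow> (nat \<Rightarrow> nat set) \<Rightarrow> (nat \<Rightarrow> nat \<Rightarrow> real) \<Rightarrow> real" where
  "gamma_BT p G Gam = Max (insert 0 {\<bar>Gam l l'\<bar> | j j' l l'.
      j \<in> {1..p} \<and> j' \<in> {1..p} \<and> l \<in> G j \<and> l' \<in> G j' \<and> rank_in G j l \<noteq> rank_in G j' l'})"

definition gamma_BG :: "nat \<Rightarrow> (nat \<Rightarrow> nat set) \<Rightarrow> (nat \<Rightarrow> nat \<Rightarrow> real) \<Rightarrow> real" where
  "gamma_BG p G Gam = Max (insert 0 {\<bar>Gam l l'\<bar> | j j' l l'.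
      j \<in> {1..p} \<and> j' \<in> {1..p} \<and> j \<noteq> j' \<and> l \<in> G j \<and> l' \<in> G j' \<and> rank_in G j l = rank_in G j' l'})"

definition r_fun :: "nat \<Rightarrow> (nat \<Rightarrow> nat set) \<Rightarrow> (nat \<Rightarrow> nat \<Rightarrow> real) \<Rightarrow> nat set \<Rightarrow> real" where
  "r_fun p G Gam I = real (card I) * (gamma_BT p G Gam)\<^sup>2
     + real (card {j\<in>{1..p}. \<exists>l\<in>I. l \<in> G j}) * (gamma_BG p G Gam)\<^sup>2"

definition normI1 :: "nat set \<Rightarrow> (nat \<Rightarrow> real) \<Rightarrow> real" where
  "normI1 I u = (\<Sum>l\<in>I. \<bar>u l\<bar>)"

definition normI2sq :: "nat set \<Rightarrow> (nat \<Rightarrow> real) \<Rightarrow> real" where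
  "normI2sq I u = (\<Sum>l\<in>I. (u l)\<^sup>2)"

definition Bvec :: "(nat \<Rightarrow> nat \<Rightarrow> real) \<Rightarrow> (nat \<Rightarrow> real) \<Rightarrow> nat set \<Rightarrow> nat \<Rightarrow> real" where
  "Bvec Gam \<alpha> C l = (\<Sum>l'\<in>C - {l}. Gam l l' * \<alpha> l')"

end

theory Submission
  imports Defs
begin

lemma part_sub: "is_partition k p G \<Longrightarrow> j \<in> {1..p} \<Longrightarrow> G j \<subseteq> {1..k}"
  unfolding is_partition_def by blast

lemma part_ex: "is_partition k p G \<Longrightarrow> l \<in> {1..k} \<Longrightarrow> \<exists>j\<in>{1..p}. l \<in> G j"
  unfolding is_partition_def by blast

lemma part_uniq: "is_partition k p G \<Longrightarrow> j \<in> {1..p} \<Longrightarrow> j' \<in> {1..p} \<Longrightarrow> l \<in> G j \<Longrightarrow> l \<in> G j' \<Longrightarrow> j = j'"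
  unfolding is_partition_def by blast

definition grp :: "nat \<Rightarrow> (nat \<Rightarrow> nat set) \<Rightarrow> nat \<Rightarrow> nat" where
  "grp p G l = (THE j. j \<in> {1..p} \<and> l \<in> G j)"

lemma grp_eq: "is_partition k p G \<Longrightarrow> j \<in> {1..p} \<Longrightarrow> l \<in> G j \<Longrightarrow> grp p G l = j"
  unfolding grp_def by (rule the_equality) (auto dest: part_uniq)

lemma grp_in: "is_partition k p G \<Longrightarrow> l \<in> {1..k} \<Longrightarrow> grp p G l \<in> {1..p} \<and> l \<in> G (grp p G l)"
  using part_ex[of k p G l] grp_eq[of k p G] by metis

lemma rank_inj:
  fixes A :: "nat set"
  assumes "finite A" "l \<in> A" "l' \<in> A" "card {x\<in>A. x \<le> l} = card {x\<in>A. x \<le> l'}"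
  shows "l = l'"
proof (rule ccontr)
  assume ne: "l \<noteq> l'"
  { fix a b assume ab: "a \<in> A" "b \<in> A" "a < b"
    have "{x\<in>A. x \<le> a} \<subseteq> {x\<in>A. x \<le> b}" "b \<in> {x\<in>A. x \<le> b}" "b \<notin> {x\<in>A. x \<le> a}" using ab by auto
    hence "{x\<in>A. x \<le> a} \<subset> {x\<in>A. x \<le> b}" by blast
    hence "card {x\<in>A. x \<le> a} < card {x\<in>A. x \<le> b}"
      by (rule psubset_card_mono[rotated]) (use assms in auto) }
  note * = this
  show False using ne *[of l l'] *[of l' l] assms by linarith
qed

definition rk :: "nat \<Rightarrow> (nat \<Rightarrow> nat set) \<Rightarrow> nat \<Rightarrow> nat" where
  "rk p G l = rank_in G (grp p G l) l"

lemma finite_BT: "is_partition k p G \<Longrightarrow> finite {\<bar>Gam l l'\<bar> | j j' l l'.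
      j \<in> {1..p} \<and> j' \<in> {1..p} \<and> l \<in> G j \<and> l' \<in> G j' \<and> rank_in G j l \<noteq> rank_in G j' l'}"
proof -
  assume P: "is_partition k p G"
  have "{\<bar>Gam l l'\<bar> | j j' l l'.
      j \<in> {1..p} \<and> j' \<in> {1..p} \<and> l \<in> G j \<and> l' \<in> G j' \<and> rank_in G j l \<noteq> rank_in G j' l'}
     \<subseteq> (\<lambda>(l,l'). \<bar>Gam l l'\<bar>) ` ({1..k} \<times> {1..k})"
    using part_sub[OF P] by fastforce
  thus ?thesis by (rule finite_subset) auto
qed

lemma finite_BG: "is_partition k p G \<Longrightarrow> finite {\<bar>Gam l l'\<bar> | j j' l l'.
      j \<in> {1..p} \<and> j' \<in> {1..p} \<and> j \<noteq> j' \<and> l \<in> G j \<and> l' \<in> G j' \<and> rank_in G j l = rank_in G j' l'}"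
proof -
  assume P: "is_partition k p G"
  have "{\<bar>Gam l l'\<bar> | j j' l l'.
      j \<in> {1..p} \<and> j' \<in> {1..p} \<and> j \<noteq> j' \<and> l \<in> G j \<and> l' \<in> G j' \<and> rank_in G j l = rank_in G j' l'}
     \<subseteq> (\<lambda>(l,l'). \<bar>Gam l l'\<bar>) ` ({1..k} \<times> {1..k})"
    using part_sub[OF P] by fastforce
  thus ?thesis by (rule finite_subset) auto
qed

lemma gBT_nonneg: "is_partition k p G \<Longrightarrow> 0 \<le> gamma_BT p G Gam"
  unfolding gamma_BT_def
  by (rule Max_ge) (use finite_BT in auto)

lemma gBG_nonneg: "is_partition k p G \<Longrightarrow> 0 \<le> gamma_BG p G Gam"
  unfolding gamma_BG_def
  by (rule Max_ge) (use finite_BG in auto)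

lemma bound_T:
  assumes P: "is_partition k p G" and l: "l \<in> {1..k}" "l' \<in> {1..k}" and r: "rk p G l \<noteq> rk p G l'"
  shows "\<bar>Gam l l'\<bar> \<le> gamma_BT p G Gam"
  unfolding gamma_BT_def
proof (rule Max_ge)
  show "finite (insert 0 {\<bar>Gam l l'\<bar> | j j' l l'.
      j \<in> {1..p} \<and> j' \<in> {1..p} \<and> l \<in> G j \<and> l' \<in> G j' \<and> rank_in G j l \<noteq> rank_in G j' l'})"
    using finite_BT[OF P] by simp
  show "\<bar>Gam l l'\<bar> \<in> insert 0 {\<bar>Gam l l'\<bar> | j j' l l'.
      j \<in> {1..p} \<and> j' \<in> {1..p} \<and> l \<in> G j \<and> l' \<in> G j' \<and> rank_in G j l \<noteq> rank_in G j' l'}"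
    using grp_in[OF P l(1)] grp_in[OF P l(2)] r unfolding rk_def by blast
qed

lemma bound_G:
  assumes P: "is_partition k p G" and l: "l \<in> {1..k}" "l' \<in> {1..k}" and r: "rk p G l = rk p G l'"
    and ne: "l \<noteq> l'"
  shows "\<bar>Gam l l'\<bar> \<le> gamma_BG p G Gam"
  unfolding gamma_BG_def
proof (rule Max_ge)
  show "finite (insert 0 {\<bar>Gam l l'\<bar> | j j' l l'.
      j \<in> {1..p} \<and> j' \<in> {1..p} \<and> j \<noteq> j' \<and> l \<in> G j \<and> l' \<in> G j' \<and> rank_in G j l = rank_in G j' l'})"
    using finite_BG[OF P] by simp
  have g1: "grp p G l \<in> {1..p}" "l \<in> G (grp p G l)" and g2: "grp p G l' \<in> {1..p}" "l' \<in> G (grp p G l')"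
    using grp_in[OF P l(1)] grp_in[OF P l(2)] by auto
  have "grp p G l \<noteq> grp p G l'"
  proof
    assume e: "grp p G l = grp p G l'"
    have "finite (G (grp p G l))" using part_sub[OF P g1(1)] finite_subset by blast
    then show False using rank_inj[of "G (grp p G l)" l l'] g1 g2 e r ne
      unfolding rk_def rank_in_def by auto
  qed
  then show "\<bar>Gam l l'\<bar> \<in> insert 0 {\<bar>Gam l l'\<bar> | j j' l l'.
      j \<in> {1..p} \<and> j' \<in> {1..p} \<and> j \<noteq> j' \<and> l \<in> G j \<and> l' \<in> G j' \<and> rank_in G j l = rank_in G j' l'}"
    using g1 g2 r unfolding rk_def by blast
qed

lemma sum_sq_le:
  fixes f :: "nat \<Rightarrow> real"
  assumes "finite A" "\<And>x. x \<in> A \<Longrightarrow> 0 \<le> f x"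
  shows "(\<Sum>x\<in>A. (f x)\<^sup>2) \<le> (\<Sum>x\<in>A. f x)\<^sup>2"
proof -
  have "(\<Sum>x\<in>A. (f x)\<^sup>2) \<le> (\<Sum>x\<in>A. f x * (\<Sum>y\<in>A. f y))"
  proof (rule sum_mono)
    fix x assume x: "x \<in> A"
    have "f x \<le> (\<Sum>y\<in>A. f y)" using member_le_sum[of x A f] assms x by auto
    then show "(f x)\<^sup>2 \<le> f x * (\<Sum>y\<in>A. f y)" using assms(2)[OF x]
      by (simp add: power2_eq_square mult_left_mono)
  qed
  also have "\<dots> = (\<Sum>x\<in>A. f x)\<^sup>2" by (simp add: power2_eq_square sum_distrib_right)
  finally show ?thesis .
qed

lemma sq2: fixes B x y :: real assumes "\<bar>B\<bar> \<le> x + y" "0 \<le> x" "0 \<le> y"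
  shows "B\<^sup>2 \<le> 2 * x\<^sup>2 + 2 * y\<^sup>2"
proof -
  have "B\<^sup>2 \<le> (x+y)\<^sup>2" using assms
    by (metis abs_ge_zero abs_le_square_iff abs_of_nonneg add_nonneg_nonneg order_trans)
  also have "\<dots> = 2 * x\<^sup>2 + 2 * y\<^sup>2 - (x-y)\<^sup>2" by (simp add: power2_eq_square algebra_simps)
  also have "\<dots> \<le> 2 * x\<^sup>2 + 2 * y\<^sup>2" by simp
  finally show ?thesis .
qed

theorem lemma3:
  fixes n k p :: nat and X :: "nat \<Rightarrow> nat \<Rightarrow> real" and \<alpha> :: "nat \<Rightarrow> real"
    and G :: "nat \<Rightarrow> nat set" and I C :: "nat set"
  assumes "is_partition k p G"
    and "I \<subseteq> {1..k}" and "C \<subseteq> {1..k}"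
  shows "normI2sq I (Bvec (gram n X) \<alpha> C)
           \<le> 2 * (normI1 C \<alpha>)\<^sup>2 * r_fun p G (gram n X) I"
proof -
  note P = assms(1)
  define Gam where "Gam = gram n X"
  define S where "S = normI1 C \<alpha>"
  define T where "T = gamma_BT p G Gam"
  define Gg where "Gg = gamma_BG p G Gam"
  define a where "a l = (\<Sum>l'\<in>C. if rk p G l' \<noteq> rk p G l then \<bar>\<alpha> l'\<bar> else 0)" for l
  define b where "b l = (\<Sum>l'\<in>C. if rk p G l' = rk p G l then \<bar>\<alpha> l'\<bar> else 0)" for l
  define J where "J = {j\<in>{1..p}. \<exists>l\<in>I. l \<in> G j}"
  have finC: "finite C" and finI: "finite I" using assms(2,3) finite_subset by auto
  have T0: "0 \<le> T" unfolding T_def using gBT_nonneg[OF P] .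
  have G0: "0 \<le> Gg" unfolding Gg_def using gBG_nonneg[OF P] .
  have S0: "0 \<le> S" unfolding S_def normI1_def by (simp add: sum_nonneg)
  have a0: "0 \<le> a l" for l unfolding a_def by (simp add: sum_nonneg)
  have b0: "0 \<le> b l" for l unfolding b_def by (simp add: sum_nonneg)
  have aS: "a l \<le> S" for l unfolding a_def S_def normI1_def by (rule sum_mono) auto
  have step1: "\<bar>Bvec Gam \<alpha> C l\<bar> \<le> T * a l + Gg * b l" if l: "l \<in> I" for l
  proof -
    let ?f = "\<lambda>l'. if rk p G l' \<noteq> rk p G l then T * \<bar>\<alpha> l'\<bar> else Gg * \<bar>\<alpha> l'\<bar>"
    have "\<bar>Bvec Gam \<alpha> C l\<bar> \<le> (\<Sum>l'\<in>C - {l}. \<bar>Gam l l' * \<alpha> l'\<bar>)"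
      unfolding Bvec_def by (rule sum_abs)
    also have "\<dots> \<le> (\<Sum>l'\<in>C - {l}. ?f l')"
    proof (rule sum_mono)
      fix l' assume l': "l' \<in> C - {l}"
      have lk: "l \<in> {1..k}" "l' \<in> {1..k}" using l l' assms(2,3) by auto
      show "\<bar>Gam l l' * \<alpha> l'\<bar> \<le> ?f l'"
      proof (cases "rk p G l' \<noteq> rk p G l")
        case True
        then have "\<bar>Gam l l'\<bar> \<le> T" unfolding T_def using bound_T[OF P lk] by metis
        then show ?thesis using True by (simp add: abs_mult mult_right_mono)
      next
        case False
        then have "\<bar>Gam l l'\<bar> \<le> Gg" unfolding Gg_def using bound_G[OF P lk] l' by auto
        then show ?thesis using False by (simp add: abs_mult mult_right_mono)
      qed
    qed
    also have "\<dots> \<le> (\<Sum>l'\<in>C. ?f l')"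
      by (rule sum_mono2[OF finC]) (use T0 G0 in auto)
    also have "\<dots> = T * a l + Gg * b l"
      unfolding a_def b_def sum_distrib_left sum.distrib[symmetric]
      by (rule sum.cong) auto
    finally show ?thesis .
  qed
  have step2: "(Bvec Gam \<alpha> C l)\<^sup>2 \<le> 2 * T\<^sup>2 * S\<^sup>2 + 2 * Gg\<^sup>2 * (b l)\<^sup>2" if l: "l \<in> I" for l
  proof -
    have "(Bvec Gam \<alpha> C l)\<^sup>2 \<le> 2 * (T * a l)\<^sup>2 + 2 * (Gg * b l)\<^sup>2"
      by (rule sq2[OF step1[OF l]]) (use T0 G0 a0 b0 in auto)
    moreover have "(a l)\<^sup>2 \<le> S\<^sup>2" using a0 aS by (simp add: power_mono)
    then have "T\<^sup>2 * (a l)\<^sup>2 \<le> T\<^sup>2 * S\<^sup>2" by (rule mult_left_mono) simp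
    ultimately show ?thesis
      by (simp add: power_mult_distrib)
  qed
  have step4: "(\<Sum>l\<in>I. (b l)\<^sup>2) \<le> real (card J) * S\<^sup>2"
  proof -
    have finJ: "finite J" unfolding J_def by auto
    have Ieq: "I = (\<Union>j\<in>J. I \<inter> G j)"
      using grp_in[OF P] assms(2) unfolding J_def by blast
    have "(\<Sum>l\<in>I. (b l)\<^sup>2) = (\<Sum>j\<in>J. \<Sum>l\<in>I \<inter> G j. (b l)\<^sup>2)"
      apply (subst Ieq)
      apply (rule sum.UNION_disjoint)
      using finJ finI part_uniq[OF P] unfolding J_def by auto
    also have "\<dots> \<le> (\<Sum>j\<in>J. S\<^sup>2)"
    proof (rule sum_mono)
      fix j assume j: "j \<in> J"
      then have jp: "j \<in> {1..p}" unfolding J_def by auto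
      have finA: "finite (I \<inter> G j)" using finI by auto
      have rkj: "rk p G l = rank_in G j l" if "l \<in> G j" for l
        unfolding rk_def using grp_eq[OF P jp that] by simp
      have finG: "finite (G j)" using part_sub[OF P jp] finite_subset by blast
      have "(\<Sum>l\<in>I \<inter> G j. b l) = (\<Sum>l'\<in>C. \<Sum>l\<in>I \<inter> G j. if rk p G l' = rk p G l then \<bar>\<alpha> l'\<bar> else 0)"
        unfolding b_def by (rule sum.swap)
      also have "\<dots> \<le> (\<Sum>l'\<in>C. \<bar>\<alpha> l'\<bar>)"
      proof (rule sum_mono)
        fix l' assume "l' \<in> C"
        let ?A = "{l\<in>I \<inter> G j. rk p G l' = rk p G l}"
        have "(\<Sum>l\<in>I \<inter> G j. if rk p G l' = rk p G l then \<bar>\<alpha> l'\<bar> else 0) = real (card ?A) * \<bar>\<alpha> l'\<bar>"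
          using sum.inter_filter[OF finA, of "\<lambda>_. \<bar>\<alpha> l'\<bar>" "\<lambda>l. rk p G l' = rk p G l", symmetric]
          by simp
        moreover have "card ?A \<le> 1"
        proof -
          have "\<forall>x\<in>?A. \<forall>y\<in>?A. x = y"
          proof (intro ballI)
            fix x y assume x: "x \<in> ?A" and y: "y \<in> ?A"
            then have xy: "x \<in> G j" "y \<in> G j" "rank_in G j x = rank_in G j y"
              using rkj by auto
            show "x = y" by (rule rank_inj[OF finG xy(1,2)]) (use xy(3) in \<open>simp add: rank_in_def\<close>)
          qed
          moreover have "finite ?A" using finA by (rule finite_subset[rotated]) auto
          ultimately show ?thesis using card_le_Suc0_iff_eq[of ?A] by simp
        qed
        ultimately show "(\<Sum>l\<in>I \<inter> G j. if rk p G l' = rk p G l then \<bar>\<alpha> l'\<bar> else 0) \<le> \<bar>\<alpha> l'\<bar>"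
          using mult_right_mono[of "real (card ?A)" 1 "\<bar>\<alpha> l'\<bar>"] by simp
      qed
      finally have bs: "(\<Sum>l\<in>I \<inter> G j. b l) \<le> S" unfolding S_def normI1_def .
      have "(\<Sum>l\<in>I \<inter> G j. (b l)\<^sup>2) \<le> (\<Sum>l\<in>I \<inter> G j. b l)\<^sup>2"
        by (rule sum_sq_le[OF finA b0])
      also have "\<dots> \<le> S\<^sup>2" using bs by (simp add: power_mono sum_nonneg b0)
      finally show "(\<Sum>l\<in>I \<inter> G j. (b l)\<^sup>2) \<le> S\<^sup>2" .
    qed
    also have "\<dots> = real (card J) * S\<^sup>2" by simp
    finally show ?thesis .
  qed
  have "normI2sq I (Bvec Gam \<alpha> C) \<le> (\<Sum>l\<in>I. 2 * T\<^sup>2 * S\<^sup>2 + 2 * Gg\<^sup>2 * (b l)\<^sup>2)"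
    unfolding normI2sq_def by (rule sum_mono) (rule step2)
  also have "\<dots> = real (card I) * (2 * T\<^sup>2 * S\<^sup>2) + 2 * Gg\<^sup>2 * (\<Sum>l\<in>I. (b l)\<^sup>2)"
    by (simp add: sum.distrib sum_distrib_left)
  also have "\<dots> \<le> real (card I) * (2 * T\<^sup>2 * S\<^sup>2) + 2 * Gg\<^sup>2 * (real (card J) * S\<^sup>2)"
    using step4 by (simp add: mult_left_mono)
  also have "\<dots> = 2 * S\<^sup>2 * r_fun p G Gam I"
    unfolding r_fun_def T_def Gg_def J_def by (simp add: algebra_simps)
  finally show ?thesis unfolding Gam_def S_def .
qed

end
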